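(* For every Tychonoff space $X$, the following are equivalent: (1) $C_p(X)\models S_1(\Gamma_f,\mathcal B_f)$ for every $f\in C(X)$; (2) $X\models S_1(\Gamma_F,\mathcal O)$.
   Context: All spaces are Tychonoff; $C_p(X)$ is $C(X)$ with pointwise convergence topology. For $f\in C(X)$: $\Gamma_f$ is the family of infinite $A\subseteq C(X)$ with $f\notin A$ such that every neighbourhood of $f$ contains all but finitely many elements of $A$; $\mathcal B_f$ is the family of sets $B\subseteq C(X)$ such that for every $x\in X$ and $\varepsilon>0$ there is $h\in B$ with $|h(x)-f(x)|<\varepsilon$. Zero-set: $g^{-1}(0)$, $g\in C(X)$; cozero-set: its complement. A cover $\mathcal U$ of $X$ always means $X=\bigcup\mathcal U$, $X\notin\mathcal U$; $\mathcal O$: family of open covers; $\gamma$-cover: infinite, each point in all but finitely many members. $\Gamma_F$: $\gamma$-covers $\mathcal U$ of $X$ by cozero-sets for which there are zero-sets $F(U)\subseteq U$ ($U\in\mathcal U$) with $\{F(U):U\in\mathcal U\}$ a $\gamma$-cover of $X$. $S_1(\mathcal P,\mathcal Q)$: for every sequence $(P_n)$ of elements of $\mathcal P$ there are $p_n\in P_n$ with $\{p_n:n\in\omega\}\in\mathcal Q$. *)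

theory Defs
  imports "HOL-Analysis.Analysis"
begin

definition tychonoff_space :: "'a topology \<Rightarrow> bool" where
  "tychonoff_space X \<longleftrightarrow> completely_regular_space X \<and> Hausdorff_space X"

text \<open>C(X): continuous real-valued functions on X, normalised to 0 outside the
  carrier so that each element of C(X) is represented exactly once.\<close>
definition Cfun :: "'a topology \<Rightarrow> ('a \<Rightarrow> real) set" where
  "Cfun X = {f. continuous_map X euclideanreal f \<and> (\<forall>x. x \<notin> topspace X \<longrightarrow> f x = 0)}"

definition Cp_nbhd :: "'a topology \<Rightarrow> ('a \<Rightarrow> real) \<Rightarrow> 'a set \<Rightarrow> real \<Rightarrow> ('a \<Rightarrow> real) set" where
  "Cp_nbhd X f F e = {g \<in> Cfun X. \<forall>x\<in>F. \<bar>g x - f x\<bar> < e}"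

definition Gamma_f :: "'a topology \<Rightarrow> ('a \<Rightarrow> real) \<Rightarrow> ('a \<Rightarrow> real) set set" where
  "Gamma_f X f = {A. A \<subseteq> Cfun X \<and> infinite A \<and> f \<notin> A \<and>
     (\<forall>F e. finite F \<and> F \<subseteq> topspace X \<and> e > 0 \<longrightarrow> finite (A - Cp_nbhd X f F e))}"

definition B_f :: "'a topology \<Rightarrow> ('a \<Rightarrow> real) \<Rightarrow> ('a \<Rightarrow> real) set set" where
  "B_f X f = {B. B \<subseteq> Cfun X \<and>
     (\<forall>x\<in>topspace X. \<forall>e>0. \<exists>h\<in>B. \<bar>h x - f x\<bar> < e)}"

definition zero_set :: "'a topology \<Rightarrow> 'a set \<Rightarrow> bool" where
  "zero_set X Z \<longleftrightarrow> (\<exists>g. continuous_map X euclideanreal g \<and> Z = {x \<in> topspace X. g x = 0})"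

definition cozero_set :: "'a topology \<Rightarrow> 'a set \<Rightarrow> bool" where
  "cozero_set X U \<longleftrightarrow> (\<exists>g. continuous_map X euclideanreal g \<and> U = {x \<in> topspace X. g x \<noteq> 0})"

definition is_cover :: "'a topology \<Rightarrow> 'a set set \<Rightarrow> bool" where
  "is_cover X \<U> \<longleftrightarrow> \<Union>\<U> = topspace X \<and> topspace X \<notin> \<U>"

definition open_covers :: "'a topology \<Rightarrow> 'a set set set" where
  "open_covers X = {\<U>. is_cover X \<U> \<and> (\<forall>U\<in>\<U>. openin X U)}"

definition gamma_cover :: "'a topology \<Rightarrow> 'a set set \<Rightarrow> bool" where
  "gamma_cover X \<U> \<longleftrightarrow> is_cover X \<U> \<and> infinite \<U> \<and>
     (\<forall>x\<in>topspace X. finite {U \<in> \<U>. x \<notin> U})"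

definition Gamma_F :: "'a topology \<Rightarrow> 'a set set set" where
  "Gamma_F X = {\<U>. gamma_cover X \<U> \<and> (\<forall>U\<in>\<U>. cozero_set X U) \<and>
     (\<exists>F. (\<forall>U\<in>\<U>. zero_set X (F U) \<and> F U \<subseteq> U) \<and> gamma_cover X (F ` \<U>))}"

definition S1 :: "'b set set \<Rightarrow> 'b set set \<Rightarrow> bool" where
  "S1 \<P> \<Q> \<longleftrightarrow> (\<forall>P :: nat \<Rightarrow> 'b set. (\<forall>n. P n \<in> \<P>) \<longrightarrow>
     (\<exists>p. (\<forall>n. p n \<in> P n) \<and> range p \<in> \<Q>))"

end

theory Submission imports Defs "HOL-Library.Nat_Bijection" begin

lemma gamma_image:
  assumes inf: "infinite A"
    and sub: "\<And>a. a \<in> A \<Longrightarrow> g a \<subseteq> topspace X"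
    and nt: "topspace X \<notin> g ` A"
    and cof: "\<And>x. x \<in> topspace X \<Longrightarrow> finite {a\<in>A. x \<notin> g a}"
  shows "gamma_cover X (g ` A)"
proof -
  have cov: "\<Union>(g ` A) = topspace X"
  proof
    show "\<Union>(g ` A) \<subseteq> topspace X" using sub by blast
    show "topspace X \<subseteq> \<Union>(g ` A)"
    proof
      fix x assume x: "x \<in> topspace X"
      have "A \<noteq> {a\<in>A. x \<notin> g a}" using cof[OF x] inf by force
      then obtain a where "a \<in> A" "x \<in> g a" by blast
      then show "x \<in> \<Union>(g ` A)" by blast
    qed
  qed
  have fin: "finite {U \<in> g ` A. x \<notin> U}" if x: "x \<in> topspace X" for x
  proof -
    have "{U \<in> g ` A. x \<notin> U} = g ` {a\<in>A. x \<notin> g a}" by blast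
    then show ?thesis using cof[OF x] by simp
  qed
  have infi: "infinite (g ` A)"
  proof
    assume f: "finite (g ` A)"
    have "A = (\<Union>V\<in>g ` A. {a\<in>A. g a = V})" by blast
    then obtain V where V: "V \<in> g ` A" "infinite {a\<in>A. g a = V}"
      using f inf by (metis (no_types, lifting) finite_UN)
    have "topspace X \<subseteq> V"
    proof
      fix x assume x: "x \<in> topspace X"
      show "x \<in> V"
      proof (rule ccontr)
        assume "x \<notin> V"
        then have "{a\<in>A. g a = V} \<subseteq> {a\<in>A. x \<notin> g a}" by blast
        then show False using cof[OF x] V(2) finite_subset by blast
      qed
    qed
    moreover have "V \<subseteq> topspace X" using V(1) sub by blast
    ultimately show False using V(1) nt by auto
  qed
  show ?thesis unfolding gamma_cover_def is_cover_def using cov nt fin infi by blast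
qed

definition Ur :: "'a topology \<Rightarrow> ('a \<Rightarrow> real) \<Rightarrow> real \<Rightarrow> ('a \<Rightarrow> real) \<Rightarrow> 'a set" where
  "Ur X f r h = {x\<in>topspace X. \<bar>h x - f x\<bar> < r}"
definition Zr :: "'a topology \<Rightarrow> ('a \<Rightarrow> real) \<Rightarrow> real \<Rightarrow> ('a \<Rightarrow> real) \<Rightarrow> 'a set" where
  "Zr X f r h = {x\<in>topspace X. \<bar>h x - f x\<bar> \<le> r/2}"

lemma cofin_nbhd:
  assumes A: "A \<in> Gamma_f X f" and x: "x \<in> topspace X" and r: "r > 0"
  shows "finite {h\<in>A. \<not> \<bar>h x - f x\<bar> < r}"
proof -
  have "finite (A - Cp_nbhd X f {x} r)" using A x r unfolding Gamma_f_def by auto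
  moreover have "{h\<in>A. \<not> \<bar>h x - f x\<bar> < r} \<subseteq> A - Cp_nbhd X f {x} r"
    unfolding Cp_nbhd_def by auto
  ultimately show ?thesis using finite_subset by blast
qed

lemma L1:
  assumes A: "A \<in> Gamma_f X f" and f: "f \<in> Cfun X" and r: "r > 0"
    and nt: "topspace X \<notin> Ur X f r ` A"
  shows "Ur X f r ` A \<in> Gamma_F X"
proof -
  have Ainf: "infinite A" and AC: "A \<subseteq> Cfun X" using A unfolding Gamma_f_def by auto
  have fc: "continuous_map X euclideanreal f" using f unfolding Cfun_def by auto
  have hc: "continuous_map X euclideanreal h" if "h \<in> A" for h using AC that unfolding Cfun_def by auto
  have g1: "gamma_cover X (Ur X f r ` A)"
  proof (rule gamma_image[OF Ainf _ nt])
    show "Ur X f r a \<subseteq> topspace X" for a unfolding Ur_def by auto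
    fix x assume x: "x \<in> topspace X"
    have "{a \<in> A. x \<notin> Ur X f r a} \<subseteq> {h\<in>A. \<not> \<bar>h x - f x\<bar> < r}" unfolding Ur_def using x by auto
    then show "finite {a \<in> A. x \<notin> Ur X f r a}" using cofin_nbhd[OF A x r] finite_subset by blast
  qed
  have coz: "cozero_set X U" if U: "U \<in> Ur X f r ` A" for U
  proof -
    obtain h where h: "h \<in> A" "U = Ur X f r h" using U by blast
    let ?g = "\<lambda>x. max 0 (r - \<bar>h x - f x\<bar>)"
    have "continuous_map X euclideanreal ?g"
      by (intro continuous_map_real_max continuous_map_diff continuous_map_real_abs hc[OF h(1)] fc continuous_map_const[THEN iffD2]) auto
    moreover have "U = {x\<in>topspace X. ?g x \<noteq> 0}" unfolding h Ur_def by auto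
    ultimately show ?thesis unfolding cozero_set_def by blast
  qed
  define c where "c V = (SOME h. h \<in> A \<and> Ur X f r h = V)" for V
  have c: "c V \<in> A \<and> Ur X f r (c V) = V" if V: "V \<in> Ur X f r ` A" for V
  proof -
    obtain h where "h \<in> A" "Ur X f r h = V" using V by blast
    then show ?thesis unfolding c_def by (metis (mono_tags, lifting) someI)
  qed
  define F where "F V = Zr X f r (c V)" for V
  have ZU: "Zr X f r h \<subseteq> Ur X f r h" for h unfolding Zr_def Ur_def using r by auto
  have Fsub: "F V \<subseteq> V" if "V \<in> Ur X f r ` A" for V
    unfolding F_def using ZU c[OF that] by metis
  have Fz: "zero_set X (F V)" if "V \<in> Ur X f r ` A" for V
  proof -
    have h: "c V \<in> A" using c[OF that] by blast
    let ?g = "\<lambda>x. max 0 (\<bar>c V x - f x\<bar> - r/2)"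
    have "continuous_map X euclideanreal ?g"
      by (intro continuous_map_real_max continuous_map_diff continuous_map_real_abs hc[OF h] fc continuous_map_const[THEN iffD2]) auto
    moreover have "F V = {x\<in>topspace X. ?g x = 0}" unfolding F_def Zr_def by (auto simp: max_def split: if_splits)
    ultimately show ?thesis unfolding zero_set_def by blast
  qed
  have img: "F ` (Ur X f r ` A) = Zr X f r ` (c ` (Ur X f r ` A))" unfolding F_def by auto
  have g2: "gamma_cover X (F ` (Ur X f r ` A))"
    unfolding img
  proof (rule gamma_image)
    have "inj_on c (Ur X f r ` A)" by (metis (no_types, lifting) c inj_onI)
    then show "infinite (c ` (Ur X f r ` A))" using g1 unfolding gamma_cover_def
      using finite_imageD by blast
    show "Zr X f r a \<subseteq> topspace X" for a unfolding Zr_def by auto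
    show "topspace X \<notin> Zr X f r ` c ` Ur X f r ` A"
    proof
      assume "topspace X \<in> Zr X f r ` c ` Ur X f r ` A"
      then obtain V where V: "V \<in> Ur X f r ` A" "topspace X = Zr X f r (c V)" by blast
      then have "topspace X \<subseteq> V" using ZU c[OF V(1)] by metis
      moreover have "V \<subseteq> topspace X" using V(1) unfolding Ur_def by auto
      ultimately show False using V(1) nt by auto
    qed
    fix x assume x: "x \<in> topspace X"
    have "{a \<in> c ` Ur X f r ` A. x \<notin> Zr X f r a} \<subseteq> {h\<in>A. \<not> \<bar>h x - f x\<bar> < r/2}"
      unfolding Zr_def using x c by fastforce
    then show "finite {a \<in> c ` Ur X f r ` A. x \<notin> Zr X f r a}"
      using cofin_nbhd[OF A x, of "r/2"] r finite_subset by auto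
  qed
  show ?thesis unfolding Gamma_F_def using g1 coz Fsub Fz g2 by blast
qed

lemma dir21:
  assumes S: "S1 (Gamma_F X) (open_covers X)" and f: "f \<in> Cfun X"
  shows "S1 (Gamma_f X f) (B_f X f)"
  unfolding S1_def
proof (intro allI impI)
  fix A :: "nat \<Rightarrow> ('a \<Rightarrow> real) set"
  assume A: "\<forall>n. A n \<in> Gamma_f X f"
  define r :: "nat \<Rightarrow> real" where "r n = inverse (real (Suc (fst (prod_decode n))))" for n
  have rpos: "r n > 0" for n unfolding r_def by simp
  define good where "good n \<longleftrightarrow> (\<exists>h\<in>A n. Ur X f (r n) h = topspace X)" for n
  define row where "row k \<longleftrightarrow> (\<exists>m. good (prod_encode (k,m)))" for k
  have "\<exists>q. \<not> row k \<longrightarrow> (\<forall>m. q m \<in> Ur X f (r (prod_encode (k,m))) ` A (prod_encode (k,m))) \<and> range q \<in> open_covers X" for k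
  proof (cases "row k")
    case False
    have "\<And>m. Ur X f (r (prod_encode (k,m))) ` A (prod_encode (k,m)) \<in> Gamma_F X"
    proof -
      fix m
      have nt: "topspace X \<notin> Ur X f (r (prod_encode (k,m))) ` A (prod_encode (k,m))"
      proof
        assume "topspace X \<in> Ur X f (r (prod_encode (k,m))) ` A (prod_encode (k,m))"
        then have "good (prod_encode (k,m))" unfolding good_def by force
        then show False using False unfolding row_def by blast
      qed
      show "Ur X f (r (prod_encode (k,m))) ` A (prod_encode (k,m)) \<in> Gamma_F X"
        by (rule L1[OF A[rule_format] f rpos nt])
    qed
    from S[unfolded S1_def, rule_format, of "\<lambda>m. Ur X f (r (prod_encode (k,m))) ` A (prod_encode (k,m))", OF this] obtain q where
      "(\<forall>m. q m \<in> Ur X f (r (prod_encode (k,m))) ` A (prod_encode (k,m))) \<and> range q \<in> open_covers X"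
      by blast
    then show ?thesis by blast
  next
    case True
    then show ?thesis by simp
  qed
  then have "\<forall>k. \<exists>q. \<not> row k \<longrightarrow> (\<forall>m. q m \<in> Ur X f (r (prod_encode (k,m))) ` A (prod_encode (k,m))) \<and> range q \<in> open_covers X" by blast
  then have "\<exists>q. \<forall>k. \<not> row k \<longrightarrow> (\<forall>m. q k m \<in> Ur X f (r (prod_encode (k,m))) ` A (prod_encode (k,m))) \<and> range (q k) \<in> open_covers X"
    by (rule choice)
  then obtain q where q: "\<And>k. \<not> row k \<Longrightarrow> (\<forall>m. q k m \<in> Ur X f (r (prod_encode (k,m))) ` A (prod_encode (k,m))) \<and> range (q k) \<in> open_covers X"
    by blast
  have ne: "A n \<noteq> {}" for n
  proof -
    have "infinite (A n)" using A unfolding Gamma_f_def by auto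
    then show ?thesis by auto
  qed
  define p where "p n = (case prod_decode n of (k,m) \<Rightarrow>
     if row k then (if good n then (SOME h. h\<in>A n \<and> Ur X f (r n) h = topspace X) else (SOME h. h \<in> A n))
     else (SOME h. h\<in>A n \<and> Ur X f (r n) h = q k m))" for n
  have pgood: "p n \<in> A n \<and> Ur X f (r n) (p n) = topspace X" if H: "prod_decode n = (k,m)" "row k" "good n" for n k m
  proof -
    obtain h where "h\<in>A n \<and> Ur X f (r n) h = topspace X" using H(3) unfolding good_def by blast
    then have "(SOME h. h\<in>A n \<and> Ur X f (r n) h = topspace X) \<in> A n \<and> Ur X f (r n) (SOME h. h\<in>A n \<and> Ur X f (r n) h = topspace X) = topspace X"
      by (rule someI[where P="\<lambda>h. h\<in>A n \<and> Ur X f (r n) h = topspace X"])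
    moreover have "p n = (SOME h. h\<in>A n \<and> Ur X f (r n) h = topspace X)" unfolding p_def using H by simp
    ultimately show ?thesis by simp
  qed
  have pbad: "p n \<in> A n \<and> Ur X f (r n) (p n) = q k m" if H: "prod_decode n = (k,m)" "\<not> row k" for n k m
  proof -
    have n: "n = prod_encode (k,m)" using H(1) by (metis prod_decode_inverse)
    obtain h where "h\<in>A n \<and> Ur X f (r n) h = q k m" using q[OF H(2)] n by blast
    then have "(SOME h. h\<in>A n \<and> Ur X f (r n) h = q k m) \<in> A n \<and> Ur X f (r n) (SOME h. h\<in>A n \<and> Ur X f (r n) h = q k m) = q k m"
      by (rule someI[where P="\<lambda>h. h\<in>A n \<and> Ur X f (r n) h = q k m"])
    moreover have "p n = (SOME h. h\<in>A n \<and> Ur X f (r n) h = q k m)" unfolding p_def using H by simp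
    ultimately show ?thesis by simp
  qed
  have pin: "p n \<in> A n" for n
  proof -
    obtain k m where km: "prod_decode n = (k,m)" by (cases "prod_decode n") auto
    show ?thesis
    proof (cases "row k")
      case True
      show ?thesis
      proof (cases "good n")
        case True then show ?thesis using pgood km \<open>row k\<close> by blast
      next
        case False
        then have "p n = (SOME h. h \<in> A n)" unfolding p_def using km \<open>row k\<close> by simp
        then show ?thesis using ne[of n] by (simp add: some_in_eq)
      qed
    next
      case False then show ?thesis using pbad km by blast
    qed
  qed
  have rk: "r (prod_encode (k,m)) = inverse (real (Suc k))" for k m unfolding r_def by simp
  have "range p \<in> B_f X f"
    unfolding B_f_def
  proof (intro CollectI conjI ballI allI impI)
    have "A n \<subseteq> Cfun X" for n using A unfolding Gamma_f_def by auto
    then show "range p \<subseteq> Cfun X" using pin by blast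
    fix x e assume x: "x \<in> topspace X" and e: "(e::real) > 0"
    obtain k where k: "inverse (real (Suc k)) < e" using reals_Archimedean[OF e] by blast
    show "\<exists>h\<in>range p. \<bar>h x - f x\<bar> < e"
    proof (cases "row k")
      case True
      then obtain m where g: "good (prod_encode (k,m))" unfolding row_def by blast
      have "Ur X f (r (prod_encode (k,m))) (p (prod_encode (k,m))) = topspace X"
        using pgood[OF prod_encode_inverse True g] by blast
      then have "\<bar>p (prod_encode (k,m)) x - f x\<bar> < inverse (real (Suc k))"
        using x rk unfolding Ur_def by auto
      then have "\<bar>p (prod_encode (k,m)) x - f x\<bar> < e" using k by linarith
      then show ?thesis by blast
    next
      case False
      then have "\<Union>(range (q k)) = topspace X" using q unfolding open_covers_def is_cover_def by blast
      then obtain m where "x \<in> q k m" using x by blast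
      moreover have "Ur X f (r (prod_encode (k,m))) (p (prod_encode (k,m))) = q k m"
        using pbad[OF prod_encode_inverse False] by blast
      ultimately have "\<bar>p (prod_encode (k,m)) x - f x\<bar> < inverse (real (Suc k))"
        using rk unfolding Ur_def by auto
      then have "\<bar>p (prod_encode (k,m)) x - f x\<bar> < e" using k by linarith
      then show ?thesis by blast
    qed
  qed
  then show "\<exists>p. (\<forall>n. p n \<in> A n) \<and> range p \<in> B_f X f" using pin by blast
qed

lemma cozero_sub: "cozero_set X U \<Longrightarrow> U \<subseteq> topspace X"
  unfolding cozero_set_def by auto

lemma cozero_open: "cozero_set X U \<Longrightarrow> openin X U"
proof -
  assume "cozero_set X U"
  then obtain g where g: "continuous_map X euclideanreal g" "U = {x \<in> topspace X. g x \<noteq> 0}"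
    unfolding cozero_set_def by blast
  have "openin X {x \<in> topspace X. g x \<in> -{0}}"
    by (rule openin_continuous_map_preimage[OF g(1)]) (simp add: open_Compl)
  moreover have "{x \<in> topspace X. g x \<in> -{0}} = U" using g(2) by auto
  ultimately show ?thesis by simp
qed

lemma L2:
  assumes U: "\<U> \<in> Gamma_F X"
  shows "\<exists>A \<in> Gamma_f X (\<lambda>x. 0). \<forall>h\<in>A. \<exists>V\<in>\<U>. \<forall>x\<in>topspace X. \<bar>h x - 0\<bar> < 1 \<longrightarrow> x \<in> V"
proof -
  obtain F where F: "\<And>U. U\<in>\<U> \<Longrightarrow> zero_set X (F U) \<and> F U \<subseteq> U" "gamma_cover X (F ` \<U>)"
    using U unfolding Gamma_F_def by blast
  have gU: "gamma_cover X \<U>" and cz: "\<And>U. U\<in>\<U> \<Longrightarrow> cozero_set X U" using U unfolding Gamma_F_def by auto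
  define c where "c W = (SOME U. U \<in> \<U> \<and> F U = W)" for W
  have c: "c W \<in> \<U> \<and> F (c W) = W" if W: "W \<in> F ` \<U>" for W
  proof -
    obtain U where "U \<in> \<U> \<and> F U = W" using W by blast
    then show ?thesis unfolding c_def by (rule someI[where P="\<lambda>U. U \<in> \<U> \<and> F U = W"])
  qed
  define \<V> where "\<V> = c ` (F ` \<U>)"
  have VU: "\<V> \<subseteq> \<U>"
  proof
    fix V assume "V \<in> \<V>"
    then obtain W where "W \<in> F ` \<U>" "V = c W" unfolding \<V>_def by blast
    then show "V \<in> \<U>" using c by blast
  qed
  have FV: "F ` \<V> = F ` \<U>"
  proof
    show "F ` \<V> \<subseteq> F ` \<U>" using VU by blast
    show "F ` \<U> \<subseteq> F ` \<V>"
    proof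
      fix W assume W: "W \<in> F ` \<U>"
      then have "c W \<in> \<V>" unfolding \<V>_def by blast
      moreover have "F (c W) = W" using c[OF W] by blast
      ultimately show "W \<in> F ` \<V>" by (metis imageI)
    qed
  qed
  have injF: "inj_on F \<V>"
  proof (rule inj_onI)
    fix V V' assume V: "V \<in> \<V>" and V': "V' \<in> \<V>" and e: "F V = F V'"
    obtain W where W: "W \<in> F ` \<U>" "V = c W" using V unfolding \<V>_def by blast
    obtain W' where W': "W' \<in> F ` \<U>" "V' = c W'" using V' unfolding \<V>_def by blast
    have "W = W'" using c[OF W(1)] c[OF W'(1)] e W(2) W'(2) by simp
    then show "V = V'" using W(2) W'(2) by simp
  qed
  have Vinf: "infinite \<V>"
  proof
    assume "finite \<V>"
    then have "finite (F ` \<U>)" using FV finite_imageI by metis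
    then show False using F(2) unfolding gamma_cover_def by blast
  qed
  define g1 where "g1 V = (SOME g. continuous_map X euclideanreal g \<and> F V = {x \<in> topspace X. g x = 0})" for V
  define g2 where "g2 V = (SOME g. continuous_map X euclideanreal g \<and> V = {x \<in> topspace X. g x \<noteq> 0})" for V
  have g1: "continuous_map X euclideanreal (g1 V) \<and> F V = {x \<in> topspace X. g1 V x = 0}" if V: "V \<in> \<U>" for V
  proof -
    obtain g where "continuous_map X euclideanreal g \<and> F V = {x \<in> topspace X. g x = 0}"
      using F(1)[OF V] unfolding zero_set_def by blast
    then show ?thesis unfolding g1_def
      by (rule someI[where P="\<lambda>g. continuous_map X euclideanreal g \<and> F V = {x \<in> topspace X. g x = 0}"])
  qed
  have g2: "continuous_map X euclideanreal (g2 V) \<and> V = {x \<in> topspace X. g2 V x \<noteq> 0}" if V: "V \<in> \<U>" for V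
  proof -
    obtain g where "continuous_map X euclideanreal g \<and> V = {x \<in> topspace X. g x \<noteq> 0}"
      using cz[OF V] unfolding cozero_set_def by blast
    then show ?thesis unfolding g2_def
      by (rule someI[where P="\<lambda>g. continuous_map X euclideanreal g \<and> V = {x \<in> topspace X. g x \<noteq> 0}"])
  qed
  define h where "h V x = (if x \<in> topspace X then \<bar>g1 V x\<bar> / (\<bar>g1 V x\<bar> + \<bar>g2 V x\<bar>) else 0)" for V x
  have den: "\<bar>g1 V x\<bar> + \<bar>g2 V x\<bar> \<noteq> 0" if V: "V \<in> \<U>" and x: "x \<in> topspace X" for V x
  proof
    assume "\<bar>g1 V x\<bar> + \<bar>g2 V x\<bar> = 0"
    then have "g1 V x = 0" "g2 V x = 0" by auto
    then have "x \<in> F V" "x \<notin> V" using g1[OF V] g2[OF V] x by auto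
    then show False using F(1)[OF V] by blast
  qed
  have hC: "h V \<in> Cfun X" if V: "V \<in> \<U>" for V
  proof -
    have "continuous_map X euclideanreal (\<lambda>x. \<bar>g1 V x\<bar> / (\<bar>g1 V x\<bar> + \<bar>g2 V x\<bar>))"
      using g1[OF V] g2[OF V] den[OF V]
      by (intro continuous_map_real_divide continuous_map_add continuous_map_real_abs) auto
    then have "continuous_map X euclideanreal (h V)"
      by (rule continuous_map_eq) (simp add: h_def)
    then show ?thesis unfolding Cfun_def h_def by auto
  qed
  have h1: "h V x = 1 \<longleftrightarrow> x \<notin> V" if V: "V \<in> \<U>" and x: "x \<in> topspace X" for V x
  proof -
    have d: "\<bar>g1 V x\<bar> + \<bar>g2 V x\<bar> \<noteq> 0" by (rule den[OF V x])
    have "h V x = 1 \<longleftrightarrow> \<bar>g1 V x\<bar> = \<bar>g1 V x\<bar> + \<bar>g2 V x\<bar>" unfolding h_def using x d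
      by (simp add: divide_eq_1_iff)
    also have "\<dots> \<longleftrightarrow> g2 V x = 0" by auto
    also have "\<dots> \<longleftrightarrow> x \<notin> V" using g2[OF V] x by auto
    finally show ?thesis .
  qed
  have h0: "h V x = 0" if V: "V \<in> \<U>" and x: "x \<in> F V" for V x
  proof -
    have "x \<in> topspace X" "g1 V x = 0" using g1[OF V] x by auto
    then show ?thesis unfolding h_def by simp
  qed
  have Vsub: "V \<subseteq> topspace X" if "V \<in> \<U>" for V using cz[OF that] cozero_sub by blast
  have injh: "inj_on h \<V>"
  proof (rule inj_onI)
    fix V V' assume V: "V \<in> \<V>" and V': "V' \<in> \<V>" and e: "h V = h V'"
    have "x \<in> V \<longleftrightarrow> x \<in> V'" if x: "x \<in> topspace X" for x
      using h1[OF _ x, of V] h1[OF _ x, of V'] V V' VU e by auto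
    then show "V = V'" using Vsub V V' VU by blast
  qed
  define A where "A = h ` \<V>"
  have "A \<in> Gamma_f X (\<lambda>x. 0)"
    unfolding Gamma_f_def
  proof (intro CollectI conjI allI impI)
    show "A \<subseteq> Cfun X" unfolding A_def using hC VU by auto
    show "infinite A" unfolding A_def using Vinf injh by (simp add: finite_image_iff)
    show "(\<lambda>x. 0) \<notin> A"
    proof
      assume "(\<lambda>x. 0) \<in> A"
      then obtain V where V: "V \<in> \<V>" "(\<lambda>x. 0) = h V" unfolding A_def by (rule imageE) simp
      have "topspace X \<notin> \<U>" using gU unfolding gamma_cover_def is_cover_def by simp
      then have "V \<noteq> topspace X" using VU V(1) by auto
      have VV: "V \<in> \<U>" using VU V(1) by auto
      then have "V \<subseteq> topspace X" by (rule Vsub)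
      then obtain x where x: "x \<in> topspace X" "x \<notin> V" using \<open>V \<noteq> topspace X\<close> by blast
      then have "h V x = 1" using h1[OF VV x(1)] by simp
      moreover have "h V x = 0" using fun_cong[OF V(2), of x] by simp
      ultimately show False by simp
    qed
    fix S e assume Se: "finite S \<and> S \<subseteq> topspace X \<and> (e::real) > 0"
    have fin1: "finite {V\<in>\<V>. x \<notin> F V}" if x: "x \<in> topspace X" for x
    proof -
      have "F ` {V\<in>\<V>. x \<notin> F V} \<subseteq> {W \<in> F ` \<U>. x \<notin> W}" using FV by blast
      moreover have "finite {W \<in> F ` \<U>. x \<notin> W}" using F(2) x unfolding gamma_cover_def by simp
      ultimately have "finite (F ` {V\<in>\<V>. x \<notin> F V})" by (rule finite_subset)
      moreover have "inj_on F {V\<in>\<V>. x \<notin> F V}" by (rule inj_on_subset[OF injF]) auto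
      ultimately show ?thesis by (simp add: finite_image_iff)
    qed
    have "A - Cp_nbhd X (\<lambda>x. 0) S e \<subseteq> h ` (\<Union>x\<in>S. {V\<in>\<V>. x \<notin> F V})"
    proof
      fix k assume k: "k \<in> A - Cp_nbhd X (\<lambda>x. 0) S e"
      then obtain V where V: "V \<in> \<V>" "k = h V" unfolding A_def by blast
      have "\<exists>x\<in>S. x \<notin> F V"
      proof (rule ccontr)
        assume "\<not> (\<exists>x\<in>S. x \<notin> F V)"
        then have "\<forall>x\<in>S. h V x = 0" using h0 V(1) VU by blast
        then have "k \<in> Cp_nbhd X (\<lambda>x. 0) S e" unfolding Cp_nbhd_def using V hC VU Se by auto
        then show False using k by blast
      qed
      then show "k \<in> h ` (\<Union>x\<in>S. {V\<in>\<V>. x \<notin> F V})" using V by blast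
    qed
    moreover have "finite (\<Union>x\<in>S. {V\<in>\<V>. x \<notin> F V})"
      by (rule finite_UN_I) (use Se fin1 in auto)
    ultimately show "finite (A - Cp_nbhd X (\<lambda>x. 0) S e)" by (rule finite_subset[OF _ finite_imageI])
  qed
  moreover have "\<forall>k\<in>A. \<exists>V\<in>\<U>. \<forall>x\<in>topspace X. \<bar>k x - 0\<bar> < 1 \<longrightarrow> x \<in> V"
  proof
    fix k assume "k \<in> A"
    then obtain V where V: "V \<in> \<V>" "k = h V" unfolding A_def by blast
    have "\<forall>x\<in>topspace X. \<bar>k x - 0\<bar> < 1 \<longrightarrow> x \<in> V"
    proof (intro ballI impI)
      fix x assume x: "x \<in> topspace X" and l: "\<bar>k x - 0\<bar> < 1"
      have "V \<in> \<U>" using V VU by blast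
      from h1[OF this x] l V(2) show "x \<in> V" by auto
    qed
    then show "\<exists>V\<in>\<U>. \<forall>x\<in>topspace X. \<bar>k x - 0\<bar> < 1 \<longrightarrow> x \<in> V" using V VU by blast
  qed
  ultimately show ?thesis by blast
qed

lemma zero_Cfun: "(\<lambda>x. 0) \<in> Cfun X"
  unfolding Cfun_def by simp

lemma dir12:
  assumes H: "\<forall>f\<in>Cfun X. S1 (Gamma_f X f) (B_f X f)"
  shows "S1 (Gamma_F X) (open_covers X)"
  unfolding S1_def
proof (intro allI impI)
  fix P :: "nat \<Rightarrow> 'a set set"
  assume P: "\<forall>n. P n \<in> Gamma_F X"
  have "\<forall>n. \<exists>A. A \<in> Gamma_f X (\<lambda>x. 0) \<and> (\<forall>h\<in>A. \<exists>V\<in>P n. \<forall>x\<in>topspace X. \<bar>h x - 0\<bar> < 1 \<longrightarrow> x \<in> V)"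
  proof
    fix n show "\<exists>A. A \<in> Gamma_f X (\<lambda>x. 0) \<and> (\<forall>h\<in>A. \<exists>V\<in>P n. \<forall>x\<in>topspace X. \<bar>h x - 0\<bar> < 1 \<longrightarrow> x \<in> V)"
      using L2[OF P[rule_format, of n]] by blast
  qed
  then have "\<exists>A. \<forall>n. A n \<in> Gamma_f X (\<lambda>x. 0) \<and> (\<forall>h\<in>A n. \<exists>V\<in>P n. \<forall>x\<in>topspace X. \<bar>h x - 0\<bar> < 1 \<longrightarrow> x \<in> V)"
    by (rule choice)
  then obtain A where A: "\<And>n. A n \<in> Gamma_f X (\<lambda>x. 0)"
    and AV: "\<And>n h. h \<in> A n \<Longrightarrow> \<exists>V\<in>P n. \<forall>x\<in>topspace X. \<bar>h x - 0\<bar> < 1 \<longrightarrow> x \<in> V" by blast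
  have S: "S1 (Gamma_f X (\<lambda>x. 0)) (B_f X (\<lambda>x. 0))" using H zero_Cfun by (rule bspec)
  from S[unfolded S1_def, rule_format, of A, OF A] obtain p where
    p: "\<And>n. p n \<in> A n" and pB: "range p \<in> B_f X (\<lambda>x. 0)" by blast
  have "\<forall>n. \<exists>V. V \<in> P n \<and> (\<forall>x\<in>topspace X. \<bar>p n x - 0\<bar> < 1 \<longrightarrow> x \<in> V)"
  proof
    fix n show "\<exists>V. V \<in> P n \<and> (\<forall>x\<in>topspace X. \<bar>p n x - 0\<bar> < 1 \<longrightarrow> x \<in> V)"
      using AV[OF p[of n]] by blast
  qed
  then have "\<exists>V. \<forall>n. V n \<in> P n \<and> (\<forall>x\<in>topspace X. \<bar>p n x - 0\<bar> < 1 \<longrightarrow> x \<in> V n)"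
    by (rule choice)
  then obtain V where V: "\<And>n. V n \<in> P n" and Vx: "\<And>n x. x\<in>topspace X \<Longrightarrow> \<bar>p n x - 0\<bar> < 1 \<Longrightarrow> x \<in> V n"
    by blast
  have coz: "cozero_set X (V n)" for n
  proof -
    have "\<forall>U\<in>P n. cozero_set X U" using P unfolding Gamma_F_def by blast
    then show ?thesis using V by blast
  qed
  have ntop: "topspace X \<noteq> V n" for n
  proof -
    have "gamma_cover X (P n)" using P unfolding Gamma_F_def by blast
    then have "topspace X \<notin> P n" unfolding gamma_cover_def is_cover_def by simp
    then show ?thesis using V[of n] by auto
  qed
  have "range V \<in> open_covers X"
    unfolding open_covers_def is_cover_def
  proof (intro CollectI conjI ballI)
    show "\<Union>(range V) = topspace X"
    proof
      show "\<Union>(range V) \<subseteq> topspace X"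
      proof
        fix x assume "x \<in> \<Union>(range V)"
        then obtain n where "x \<in> V n" by blast
        then show "x \<in> topspace X" using cozero_sub[OF coz[of n]] by blast
      qed
      show "topspace X \<subseteq> \<Union>(range V)"
      proof
        fix x assume x: "x \<in> topspace X"
        have "\<forall>x\<in>topspace X. \<forall>e>0. \<exists>h\<in>range p. \<bar>h x - 0\<bar> < e" using pB unfolding B_f_def by simp
        then have "\<exists>h\<in>range p. \<bar>h x - 0\<bar> < 1" using x by simp
        then obtain h where "h \<in> range p" "\<bar>h x - 0\<bar> < 1" by blast
        then obtain n where "\<bar>p n x - 0\<bar> < 1" by blast
        then have "x \<in> V n" using Vx x by blast
        then show "x \<in> \<Union>(range V)" by blast
      qed
    qed
    show "topspace X \<notin> range V"
    proof
      assume "topspace X \<in> range V"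
      then obtain n where "topspace X = V n" by blast
      then show False using ntop by blast
    qed
    fix U assume "U \<in> range V"
    then obtain n where "U = V n" by blast
    then show "openin X U" using cozero_open[OF coz[of n]] by simp
  qed
  then show "\<exists>p. (\<forall>n. p n \<in> P n) \<and> range p \<in> open_covers X" using V by blast
qed

theorem mainTheorem19:
  fixes X :: "'a topology"
  assumes "tychonoff_space X"
  shows "(\<forall>f\<in>Cfun X. S1 (Gamma_f X f) (B_f X f)) \<longleftrightarrow> S1 (Gamma_F X) (open_covers X)"
proof
  assume "\<forall>f\<in>Cfun X. S1 (Gamma_f X f) (B_f X f)"
  then show "S1 (Gamma_F X) (open_covers X)" by (rule dir12)
next
  assume "S1 (Gamma_F X) (open_covers X)"
  then show "\<forall>f\<in>Cfun X. S1 (Gamma_f X f) (B_f X f)" using dir21 by blast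
qed

end
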